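(* Suppose the embedding uses one-time data encoding: $\rho_\theta(x)=U(\theta)S(x)|0\rangle\langle0|S(x)^\dagger U(\theta)^\dagger$ where $U(\theta)=\prod_{l=1}^L U_l(\theta_l)$ is unitary and $S(x)$ is a unitary encoding gate. Let $\kappa(x)=S(x)|0\rangle\langle0|S(x)^\dagger$. Then for $\mathcal A\in\{\mathcal S,\mathcal T\}$, $$\mathfrak R^{\mathcal A}_{\Theta,\mathcal M}\le\mathrm{Tr}\Bigl(\sqrt{\mathbb E_{x\sim p^{\mathcal A}(x)}[\kappa(x)^2]}\Bigr).$$
   Context: $\mathcal X$ finite, labels $c\in\{0,1\}$, $\Theta$ a parameter set, $\mathcal M$ the set of binary POVMs $M=(M_0,M_1)$ on $\mathbb C^n$ ($M_0,M_1\succeq0$, $M_0+M_1=I$), loss $\ell_{\theta,M}(c,x)=1-\mathrm{Tr}(M_c\rho_\theta(x))$. For task $\mathcal A$ with distribution $p^{\mathcal A}(c,x)$ (input marginal $p^{\mathcal A}(x)$) and sample size $N^{\mathcal A}$, let $(c_j,x_j)$ be i.i.d. from $p^{\mathcal A}$ and $\sigma_j$ i.i.d. uniform on $\{\pm1\}$ independent of data; $$\mathfrak R^{\mathcal A}_{\Theta,\mathcal M}=\mathbb E\Bigl[\sup_{\theta\in\Theta,M\in\mathcal M}\sum_{j=1}^{N^{\mathcal A}}\frac{\sigma_j\ell_{\theta,M}(c_j,x_j)}{\sqrt{N^{\mathcal A}}}\Bigr].$$ *)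

theory Defs
  imports "HOL-Analysis.Analysis" "HOL-Probability.Probability"
begin

type_synonym 'n cmat = "complex ^ 'n ^ 'n"

definition cadj :: "'n::finite cmat \<Rightarrow> 'n cmat" where
  "cadj A = (\<chi> i j. cnj (A $ j $ i))"

definition ctrace :: "'n::finite cmat \<Rightarrow> complex" where
  "ctrace A = (\<Sum>i\<in>UNIV. A $ i $ i)"

definition unitary :: "'n::finite cmat \<Rightarrow> bool" where
  "unitary U \<longleftrightarrow> cadj U ** U = mat 1 \<and> U ** cadj U = mat 1"

definition psd :: "'n::finite cmat \<Rightarrow> bool" where
  "psd A \<longleftrightarrow> cadj A = A \<and>
     (\<forall>v :: complex ^ 'n. 0 \<le> Re (\<Sum>i\<in>UNIV. cnj (v $ i) * (A *v v) $ i))"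

definition msqrt :: "'n::finite cmat \<Rightarrow> 'n cmat" where
  "msqrt A = (THE B. psd B \<and> B ** B = A)"

definition binary_povms :: "(nat \<Rightarrow> 'n::finite cmat) set" where
  "binary_povms = {M. psd (M 0) \<and> psd (M 1) \<and> M 0 + M 1 = mat 1}"

text \<open>The projector |0><0| onto the reference basis state with index i0.\<close>
definition proj0 :: "'n::finite \<Rightarrow> 'n cmat" where
  "proj0 i0 = (\<chi> i j. if i = i0 \<and> j = i0 then 1 else 0)"

definition kappa :: "'n::finite \<Rightarrow> ('x \<Rightarrow> 'n cmat) \<Rightarrow> 'x \<Rightarrow> 'n cmat" where
  "kappa i0 S x = S x ** proj0 i0 ** cadj (S x)"

definition layer_prod :: "nat \<Rightarrow> (nat \<Rightarrow> 'p \<Rightarrow> 'n::finite cmat) \<Rightarrow> (nat \<Rightarrow> 'p) \<Rightarrow> 'n cmat" where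
  "layer_prod L Ul \<theta> = foldr (\<lambda>l acc. Ul l (\<theta> l) ** acc) [1..<Suc L] (mat 1)"

definition loss :: "('t \<Rightarrow> 'x \<Rightarrow> 'n::finite cmat) \<Rightarrow> 't \<Rightarrow> (nat \<Rightarrow> 'n cmat) \<Rightarrow> nat \<times> 'x \<Rightarrow> real" where
  "loss \<rho> \<theta> M cx = 1 - Re (ctrace (M (fst cx) ** \<rho> \<theta> (snd cx)))"

definition rademacher ::
  "nat \<Rightarrow> (nat \<times> 'x) pmf \<Rightarrow> 't set \<Rightarrow> ('t \<Rightarrow> 'x \<Rightarrow> 'n::finite cmat) \<Rightarrow> real" where
  "rademacher N p \<Theta> \<rho> =
     measure_pmf.expectation
       (pair_pmf (Pi_pmf {..<N} undefined (\<lambda>_. p))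
                 (Pi_pmf {..<N} 1 (\<lambda>_. pmf_of_set {-1, 1::real})))
       (\<lambda>(D, \<sigma>). SUP tm \<in> \<Theta> \<times> binary_povms.
          (\<Sum>j<N. \<sigma> j * loss \<rho> (fst tm) (snd tm) (D j)) / sqrt (real N))"

end

theory Submission
  imports Defs
begin


definition ip :: "complex^'n::finite \<Rightarrow> complex^'n \<Rightarrow> complex" where
  "ip u v = (\<Sum>i\<in>UNIV. cnj (u$i) * v$i)"

definition qf :: "'n::finite cmat \<Rightarrow> complex^'n \<Rightarrow> complex" where
  "qf A v = (\<Sum>i\<in>UNIV. cnj (v $ i) * (A *v v) $ i)"

definition diagm :: "('n::finite \<Rightarrow> complex) \<Rightarrow> 'n cmat" where
  "diagm d = (\<chi> i j. if i = j then d i else 0)"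

lemma qf_ip: "qf A v = ip v (A *v v)" by (simp add: qf_def ip_def)

lemma psd_qf: "psd A \<Longrightarrow> 0 \<le> Re (qf A v)"
  unfolding psd_def qf_def by auto

lemma psd_iff: "psd A \<longleftrightarrow> cadj A = A \<and> (\<forall>v. 0 \<le> Re (qf A v))"
  unfolding psd_def qf_def by auto

lemma cadj_nth[simp]: "cadj A $ i $ j = cnj (A $ j $ i)"
  by (simp add: cadj_def)

lemma cadj_cadj[simp]: "cadj (cadj A) = A"
  by (simp add: vec_eq_iff)

lemma cadj_mult: "cadj (A ** B) = cadj B ** cadj A"
  by (simp add: vec_eq_iff matrix_matrix_mult_def mult.commute)

lemma cadj_add: "cadj (A + B) = cadj A + cadj B"
  by (simp add: vec_eq_iff)

lemma cadj_diff: "cadj (A - B) = cadj A - cadj B"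
  by (simp add: vec_eq_iff)

lemma cadj_mat: "cadj (mat c) = mat (cnj c)"
  by (simp add: vec_eq_iff mat_def)

lemma cadj_scaleR: "cadj (r *\<^sub>R A) = r *\<^sub>R cadj A"
  by (simp add: vec_eq_iff)

lemma cadj_sum: "cadj (\<Sum>x\<in>X. f x) = (\<Sum>x\<in>X. cadj (f x))"
  by (induction X rule: infinite_finite_induct) (auto simp: cadj_add vec_eq_iff)

lemma cadj_zero[simp]: "cadj 0 = 0" by (simp add: vec_eq_iff)

lemma diagm_nth[simp]: "diagm d $ i $ j = (if i = j then d i else 0)"
  by (simp add: diagm_def)

lemma cadj_diagm: "cadj (diagm d) = diagm (\<lambda>i. cnj (d i))"
  by (simp add: vec_eq_iff)


lemma mult_diagm_nth: "(A ** diagm d) $ i $ j = A $ i $ j * d j"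
proof -
  have "(A ** diagm d) $ i $ j = (\<Sum>k\<in>UNIV. A$i$k * (if k = j then d k else 0))"
    by (simp add: matrix_matrix_mult_def)
  also have "\<dots> = (\<Sum>k\<in>UNIV. if k = j then A$i$k * d k else 0)" by (rule sum.cong) auto
  also have "\<dots> = A $ i $ j * d j" by simp
  finally show ?thesis .
qed

lemma diagm_mult_nth: "(diagm d ** A) $ i $ j = d i * A $ i $ j"
proof -
  have "(diagm d ** A) $ i $ j = (\<Sum>k\<in>UNIV. (if i = k then d i else 0) * A$k$j)"
    by (simp add: matrix_matrix_mult_def)
  also have "\<dots> = (\<Sum>k\<in>UNIV. if k = i then d k * A$k$j else 0)" by (rule sum.cong) auto
  also have "\<dots> = d i * A $ i $ j" by simp
  finally show ?thesis .
qed

lemma diagm_mult: "diagm d ** diagm e = diagm (\<lambda>i. d i * e i)"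
  by (simp add: vec_eq_iff diagm_mult_nth)

lemma ctrace_add: "ctrace (A + B) = ctrace A + ctrace B"
  by (simp add: ctrace_def sum.distrib)

lemma ctrace_diff: "ctrace (A - B) = ctrace A - ctrace B"
  by (simp add: ctrace_def sum_subtractf)

lemma ctrace_scaleR: "ctrace (r *\<^sub>R A) = of_real r * ctrace A"
  unfolding ctrace_def by (simp add: sum_distrib_left) (simp add: scaleR_conv_of_real)

lemma ctrace_sum: "ctrace (\<Sum>x\<in>X. f x) = (\<Sum>x\<in>X. ctrace (f x))"
  by (induction X rule: infinite_finite_induct) (auto simp: ctrace_add ctrace_def sum.distrib)

lemma ctrace_comm: "ctrace (A ** B) = ctrace (B ** A)"
  unfolding ctrace_def matrix_matrix_mult_def
  apply simp
  apply (subst sum.swap)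
  apply (simp add: mult.commute)
  done


lemma ctrace_mat1: "ctrace (mat 1 :: 'n::finite cmat) = of_nat CARD('n)"
  by (simp add: ctrace_def mat_def)

lemma ctrace_cadj: "ctrace (cadj A) = cnj (ctrace A)"
  by (simp add: ctrace_def)

lemma ctrace_diagm: "ctrace (diagm d) = (\<Sum>i\<in>UNIV. d i)"
  by (simp add: ctrace_def)

lemma matrix_add_rdistrib': "(B + C) ** A = B ** A + C ** A"
  by (simp add: vec_eq_iff matrix_matrix_mult_def sum.distrib[symmetric] algebra_simps)

lemma matrix_diff_ldistrib: fixes A B C :: "'n::finite cmat" shows "A ** (B - C) = A ** B - A ** C"
  by (simp add: vec_eq_iff matrix_matrix_mult_def sum_subtractf[symmetric] algebra_simps vector_minus_component)

lemma matrix_diff_rdistrib: fixes A B C :: "'n::finite cmat" shows "(B - C) ** A = B ** A - C ** A"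
  by (simp add: vec_eq_iff matrix_matrix_mult_def sum_subtractf[symmetric] algebra_simps vector_minus_component)

lemma matrix_scaleR_left: fixes A B C :: "'n::finite cmat" shows "(r *\<^sub>R A) ** B = r *\<^sub>R (A ** B)"
  by (simp add: vec_eq_iff matrix_matrix_mult_def scaleR_sum_right mult_scaleR_left mult_scaleR_right vector_scaleR_component)

lemma matrix_scaleR_right: fixes A B C :: "'n::finite cmat" shows "A ** (r *\<^sub>R B) = r *\<^sub>R (A ** B)"
  by (simp add: vec_eq_iff matrix_matrix_mult_def scaleR_sum_right mult_scaleR_left mult_scaleR_right vector_scaleR_component)

lemma matrix_sum_left: "(\<Sum>x\<in>X. f x) ** B = (\<Sum>x\<in>X. f x ** B)"
  by (induction X rule: infinite_finite_induct) (auto simp: matrix_add_rdistrib')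

lemma matrix_sum_right: "B ** (\<Sum>x\<in>X. f x) = (\<Sum>x\<in>X. B ** f x)"
  by (induction X rule: infinite_finite_induct) (auto simp: matrix_add_ldistrib)

lemma unitary_cadj: "unitary U \<Longrightarrow> unitary (cadj U)"
  by (simp add: unitary_def)

lemma unitary_left: "cadj U ** U = mat 1 \<Longrightarrow> unitary U"
  unfolding unitary_def using matrix_left_right_inverse by blast

lemma unitary_mult: "unitary U \<Longrightarrow> unitary V \<Longrightarrow> unitary (U ** V)"
proof -
  assume u: "unitary U" and v: "unitary V"
  have "cadj (U ** V) ** (U ** V) = cadj V ** ((cadj U ** U) ** V)"
    by (simp add: cadj_mult matrix_mul_assoc)
  also have "\<dots> = mat 1" using u v by (simp add: unitary_def)
  finally show ?thesis by (rule unitary_left)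
qed


lemma unitary_mat1: "unitary (mat 1)"
  by (simp add: unitary_def cadj_mat)

lemma layer_prod_unitary:
  assumes "\<And>l a. unitary (Ul l a)"
  shows "unitary (layer_prod L Ul \<theta>)"
proof -
  have "\<And>xs. unitary (foldr (\<lambda>l acc. Ul l (\<theta> l) ** acc) xs (mat 1))"
  proof -
    fix xs show "unitary (foldr (\<lambda>l acc. Ul l (\<theta> l) ** acc) xs (mat 1))"
      by (induction xs) (auto simp: unitary_mat1 unitary_mult assms)
  qed
  thus ?thesis unfolding layer_prod_def by blast
qed

lemma ctrace_conj_unitary: "unitary U \<Longrightarrow> ctrace (U ** A ** cadj U) = ctrace A"
proof -
  assume u: "unitary U"
  have "ctrace (U ** A ** cadj U) = ctrace (cadj U ** (U ** A))" by (rule ctrace_comm)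
  also have "\<dots> = ctrace ((cadj U ** U) ** A)" by (simp add: matrix_mul_assoc)
  also have "\<dots> = ctrace A" using u by (simp add: unitary_def)
  finally show ?thesis .
qed


lemma ctrace_conj_unitary': "unitary U \<Longrightarrow> ctrace (cadj U ** A ** U) = ctrace A"
proof -
  assume u: "unitary U"
  have "ctrace (cadj U ** A ** U) = ctrace (U ** (cadj U ** A))" by (rule ctrace_comm)
  also have "\<dots> = ctrace ((U ** cadj U) ** A)" by (simp add: matrix_mul_assoc)
  also have "\<dots> = ctrace A" using u by (simp add: unitary_def)
  finally show ?thesis .
qed


lemma ip_adj: "ip u (A *v v) = ip (cadj A *v u) v"
  unfolding ip_def matrix_vector_mult_def
  apply (simp add: sum_distrib_left sum_distrib_right)
  apply (subst sum.swap)
  apply (simp add: mult_ac)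
  done

lemma ip_cnj: "cnj (ip u v) = ip v u"
  unfolding ip_def by (simp add: mult.commute)

lemma ip_add_right: "ip u (v + w) = ip u v + ip u w"
  unfolding ip_def by (simp add: sum.distrib distrib_left)

lemma ip_add_left: "ip (v + w) u = ip v u + ip w u"
  unfolding ip_def by (simp add: sum.distrib distrib_right)

lemma ip_diff_right: "ip u (v - w) = ip u v - ip u w"
  unfolding ip_def by (simp add: sum_subtractf right_diff_distrib)

lemma ip_diff_left: "ip (v - w) u = ip v u - ip w u"
  unfolding ip_def by (simp add: sum_subtractf left_diff_distrib)

lemma ip_scale_right: "ip u (c *s v) = c * ip u v"
  unfolding ip_def by (simp add: sum_distrib_left mult_ac)

lemma ip_scale_left: "ip (c *s u) v = cnj c * ip u v"
  unfolding ip_def by (simp add: sum_distrib_left mult_ac)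

lemma ip_sum_right: "ip u (\<Sum>x\<in>X. f x) = (\<Sum>x\<in>X. ip u (f x))"
  unfolding ip_def by (simp add: sum_distrib_left sum_component) (rule sum.swap)

lemma ip_zero_right[simp]: "ip u 0 = 0" by (simp add: ip_def)
lemma ip_zero_left[simp]: "ip 0 u = 0" by (simp add: ip_def)

lemma ip_self: "ip v v = of_real ((norm v)^2)"
proof -
  have "(norm v)^2 = (\<Sum>i\<in>UNIV. (cmod (v$i))^2)"
    by (simp add: norm_vec_def L2_set_def sum_nonneg)
  hence "of_real ((norm v)^2) = (\<Sum>i\<in>UNIV. complex_of_real ((cmod (v$i))^2))" by simp
  also have "\<dots> = ip v v" unfolding ip_def
    by (intro sum.cong refl) (simp only: complex_norm_square mult.commute)
  finally show ?thesis by simp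
qed

lemma ip_self_eq0: "ip v v = 0 \<Longrightarrow> v = 0"
  by (simp add: ip_self)

lemma Re_ip_self_nonneg: "0 \<le> Re (ip v v)"
  by (simp add: ip_self)

lemma mv_add: "(A::'n::finite cmat) *v (v + w) = A *v v + A *v w"
  by (simp add: vec_eq_iff matrix_vector_mult_def distrib_left sum.distrib)

lemma mv_diff: "(A::'n::finite cmat) *v (v - w) = A *v v - A *v w"
  by (simp add: vec_eq_iff matrix_vector_mult_def right_diff_distrib sum_subtractf)

lemma mv_scale: "(A::'n::finite cmat) *v (c *s v) = c *s (A *v v)"
  by (simp add: vec_eq_iff matrix_vector_mult_def sum_distrib_left mult_ac)

lemma scaleR_vec_eq: "r *\<^sub>R (v::complex^'n::finite) = of_real r *s v"
  by (simp add: vec_eq_iff) (simp add: scaleR_conv_of_real)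

lemma qf_scale: "qf A (c *s v) = cnj c * c * qf A v"
  unfolding qf_ip by (simp add: mv_scale ip_scale_left ip_scale_right)

lemma qf_zero[simp]: "qf A 0 = 0"
  unfolding qf_ip by (simp add: matrix_vector_mult_def)

lemma cadj_mv_herm: "cadj A = A \<Longrightarrow> ip w (A *v z) = cnj (ip z (A *v w))"
  by (metis ip_adj ip_cnj)

lemma qf_expand:
  assumes herm: "cadj A = A"
  shows "qf A (w + c *s z) = qf A w + (cnj c * ip z (A *v w) + cnj (cnj c * ip z (A *v w))) + cnj c * c * qf A z"
proof -
  have "qf A (w + c *s z) = ip (w + c *s z) (A *v w + c *s (A *v z))"
    unfolding qf_ip by (simp add: mv_add mv_scale)
  also have "\<dots> = ip w (A *v w) + c * ip w (A *v z) + cnj c * ip z (A *v w) + cnj c * c * ip z (A *v z)"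
    by (simp add: ip_add_left ip_add_right ip_scale_left ip_scale_right algebra_simps)
  also have "ip w (A *v z) = cnj (ip z (A *v w))" using cadj_mv_herm[OF herm] .
  finally show ?thesis unfolding qf_ip by (simp add: algebra_simps)
qed

lemma ip_expand:
  "ip (w + c *s z) (w + c *s z) = ip w w + (cnj c * ip z w + cnj (cnj c * ip z w)) + cnj c * c * ip z z"
proof -
  have "ip (w + c *s z) (w + c *s z) = ip w w + c * ip w z + cnj c * ip z w + cnj c * c * ip z z"
    by (simp add: ip_add_left ip_add_right ip_scale_left ip_scale_right algebra_simps)
  also have "ip w z = cnj (ip z w)" by (simp add: ip_cnj)
  finally show ?thesis by (simp add: algebra_simps)
qed

lemma qf_conj: "qf (cadj V ** A ** V) v = qf A (V *v v)"
  unfolding qf_ip by (simp add: matrix_vector_mul_assoc[symmetric] ip_adj)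


lemma small_t:
  fixes X K :: real
  assumes "X \<ge> 0" and "\<And>t. t > 0 \<Longrightarrow> 2 * t * X \<le> t^2 * X * K"
  shows "X = 0"
proof (rule ccontr)
  assume "X \<noteq> 0" hence X: "X > 0" using assms(1) by simp
  define t where "t = 1 / (\<bar>K\<bar> + 1)"
  have t: "t > 0" unfolding t_def by (simp add: add_pos_nonneg)
  have "2 * t * X \<le> t^2 * X * K" using assms(2)[OF t] .
  hence "2 \<le> t * K" using t X by (simp add: power2_eq_square)
  moreover have "t * K < 1" unfolding t_def by (simp add: divide_simps) linarith
  ultimately show False by simp
qed

lemma eig_step:
  fixes A :: "'n::finite cmat"
  assumes herm: "cadj A = A"
    and Wlin: "\<And>v w c. v \<in> W \<Longrightarrow> w \<in> W \<Longrightarrow> v + c *s w \<in> W"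
    and Wscale: "\<And>v c. v \<in> W \<Longrightarrow> c *s v \<in> W"
    and Wclosed: "closed W"
    and AW: "\<And>v. v \<in> W \<Longrightarrow> A *v v \<in> W"
    and r: "r \<in> W" "r \<noteq> 0"
  shows "\<exists>w\<in>W. ip w w = 1 \<and> (\<exists>\<mu>::real. A *v w = of_real \<mu> *s w)"
proof -
  define S where "S = sphere 0 1 \<inter> W"
  have cS: "compact S" unfolding S_def by (intro compact_Int_closed compact_sphere Wclosed)
  define f where "f v = Re (qf A v)" for v
  have cont: "continuous_on S f"
    unfolding f_def qf_def matrix_vector_mult_def
    by (auto intro!: continuous_intros continuous_on_component[OF continuous_on_id])
  have "norm ((1 / norm r) *\<^sub>R r) = 1" using r by simp
  moreover have "(1/norm r) *\<^sub>R r \<in> W" unfolding scaleR_vec_eq using Wscale[OF r(1)] .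
  ultimately have rS: "(1 / norm r) *\<^sub>R r \<in> S" unfolding S_def by simp
  obtain w where wS: "w \<in> S" and wmax: "\<And>y. y \<in> S \<Longrightarrow> f y \<le> f w"
    using continuous_attains_sup[OF cS _ cont] rS by blast
  define \<mu> where "\<mu> = f w"
  have wW: "w \<in> W" and ww: "ip w w = 1" using wS unfolding S_def by (auto simp: ip_self)
  have bound: "Re (qf A v) \<le> \<mu> * Re (ip v v)" if vW: "v \<in> W" for v
  proof (cases "v = 0")
    case True then show ?thesis by simp
  next
    case False
    define n where "n = norm v"
    have n: "n > 0" using False unfolding n_def by simp
    have "norm ((1 / n) *\<^sub>R v) = 1" using n unfolding n_def by simp
    moreover have "(1/n) *\<^sub>R v \<in> W" unfolding scaleR_vec_eq using Wscale[OF vW] .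
    ultimately have yS: "of_real (1/n) *s v \<in> S" unfolding S_def by (simp add: scaleR_vec_eq)
    have "f (of_real (1/n) *s v) \<le> \<mu>" unfolding \<mu>_def by (rule wmax[OF yS])
    hence "Re (qf A v) / n^2 \<le> \<mu>" unfolding f_def qf_scale
      by (simp add: power2_eq_square)
    moreover have "Re (ip v v) = n^2" by (simp add: ip_self n_def)
    ultimately show ?thesis using n by (simp add: divide_simps)
  qed
  have key: "ip z (A *v w - of_real \<mu> *s w) = 0" if zW: "z \<in> W" for z
  proof -
    define y where "y = ip z (A *v w - of_real \<mu> *s w)"
    define K where "K = \<mu> * Re (ip z z) - Re (qf A z)"
    have "2 * t * (cmod y)^2 \<le> t^2 * (cmod y)^2 * K" if t: "t > 0" for t
    proof -
      define c where "c = of_real t * y"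
      have vW: "w + c *s z \<in> W" using Wlin[OF wW zW] .
      have b: "Re (qf A (w + c *s z)) \<le> \<mu> * Re (ip (w + c *s z) (w + c *s z))" by (rule bound[OF vW])
      have cc0: "cnj c * c = of_real ((cmod c)^2)" by (metis complex_norm_square mult.commute)
      have "(cmod c)^2 = t^2 * (cmod y)^2" unfolding c_def by (simp add: norm_mult power_mult_distrib)
      with cc0 have cc: "cnj c * c = of_real (t^2 * (cmod y)^2)" by simp
      have e1: "Re (qf A (w + c *s z)) = \<mu> + 2 * Re (cnj c * ip z (A *v w)) + t^2 * (cmod y)^2 * Re (qf A z)"
        unfolding qf_expand[OF herm] cc \<mu>_def f_def by simp
      have e2: "Re (ip (w + c *s z) (w + c *s z)) = 1 + 2 * Re (cnj c * ip z w) + t^2 * (cmod y)^2 * Re (ip z z)"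
        unfolding ip_expand cc ww by simp
      have e3: "Re (cnj c * ip z (A *v w)) - \<mu> * Re (cnj c * ip z w) = t * (cmod y)^2"
      proof -
        have "cnj c * ip z (A *v w) - of_real \<mu> * (cnj c * ip z w) = cnj c * y"
          unfolding y_def by (simp add: ip_diff_right ip_scale_right algebra_simps)
        also have "\<dots> = of_real (t * (cmod y)^2)"
        proof -
          have "cnj y * y = of_real ((cmod y)^2)" by (metis complex_norm_square mult.commute)
          thus ?thesis unfolding c_def by simp
        qed
        finally have "Re (cnj c * ip z (A *v w) - of_real \<mu> * (cnj c * ip z w)) = t * (cmod y)^2"
          by simp
        thus ?thesis by simp
      qed
      from b e1 e2 e3 show ?thesis unfolding K_def by (simp add: algebra_simps)
    qed
    hence "(cmod y)^2 = 0" by (intro small_t[of _ K]) auto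
    thus ?thesis unfolding y_def by simp
  qed
  define z where "z = A *v w - of_real \<mu> *s w"
  have zW: "z \<in> W" unfolding z_def using Wlin[OF AW[OF wW] wW, of "- of_real \<mu>"]
    by (simp add: vec_eq_iff)
  have "ip z z = 0" using key[OF zW] unfolding z_def .
  hence "z = 0" by (rule ip_self_eq0)
  hence "A *v w = of_real \<mu> *s w" unfolding z_def by simp
  thus ?thesis using wW ww by blast
qed



lemma cont_ip: "continuous_on UNIV (\<lambda>v. ip u v)"
  unfolding ip_def by (auto intro!: continuous_intros continuous_on_component[OF continuous_on_id])

lemma proj_mv:
  fixes u :: "'i \<Rightarrow> complex^'n::finite"
  shows "(\<chi> a b. \<Sum>i\<in>F. u i $ a * cnj (u i $ b)) *v e = (\<Sum>i\<in>F. ip (u i) e *s u i)"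
  unfolding ip_def matrix_vector_mult_def
  apply (simp add: vec_eq_iff sum_component sum_distrib_left sum_distrib_right)
  apply (intro allI)
  apply (subst sum.swap)
  apply (simp add: mult_ac)
  done

lemma exists_orth:
  fixes u :: "'n \<Rightarrow> complex^'n::finite"
  assumes orth: "\<forall>i\<in>F. \<forall>j\<in>F. ip (u i) (u j) = (if i = j then 1 else 0)"
    and fin: "finite F" and card: "card F < CARD('n)"
  shows "\<exists>r. r \<noteq> 0 \<and> (\<forall>i\<in>F. ip (u i) r = 0)"
proof -
  define P :: "'n cmat" where "P = (\<chi> a b. \<Sum>i\<in>F. u i $ a * cnj (u i $ b))"
  have "ctrace P = (\<Sum>a\<in>UNIV. \<Sum>i\<in>F. u i $ a * cnj (u i $ a))"
    unfolding P_def ctrace_def by simp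
  also have "\<dots> = (\<Sum>i\<in>F. ip (u i) (u i))"
    unfolding ip_def by (subst sum.swap) (simp add: mult.commute)
  also have "\<dots> = (\<Sum>i\<in>F. 1)" using orth by (intro sum.cong) auto
  finally have trP: "ctrace P = of_nat (card F)" by simp
  have "P \<noteq> mat 1"
  proof
    assume "P = mat 1"
    hence "of_nat (card F) = (of_nat CARD('n) :: complex)" using trP ctrace_mat1 by metis
    hence "card F = CARD('n)" using of_nat_eq_iff by blast
    thus False using card by simp
  qed
  then obtain e where e: "P *v e \<noteq> mat 1 *v e" using matrix_eq by blast
  define r where "r = e - P *v e"
  have r0: "r \<noteq> 0" using e unfolding r_def by simp
  have "ip (u k) r = 0" if k: "k \<in> F" for k
  proof -
    have "ip (u k) (P *v e) = (\<Sum>i\<in>F. ip (u i) e * ip (u k) (u i))"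
      unfolding P_def proj_mv by (simp add: ip_sum_right ip_scale_right)
    also have "\<dots> = (\<Sum>i\<in>F. if i = k then ip (u i) e else 0)"
      using orth k by (intro sum.cong) auto
    also have "\<dots> = ip (u k) e" using k fin by simp
    finally show ?thesis unfolding r_def by (simp add: ip_diff_right)
  qed
  thus ?thesis using r0 by blast
qed

lemma eig_family:
  fixes A :: "'n::finite cmat"
  assumes herm: "cadj A = A" and fin: "finite (I :: 'n set)"
  shows "\<exists>u lam. (\<forall>i\<in>I. \<forall>j\<in>I. ip (u i) (u j) = (if i = j then 1 else 0)) \<and>
                (\<forall>i\<in>I. A *v u i = of_real (lam i) *s u i)"
  using fin
proof (induction I rule: finite_induct)
  case empty
  then show ?case by simp
next
  case (insert x F)
  obtain u lam where orth: "\<forall>i\<in>F. \<forall>j\<in>F. ip (u i) (u j) = (if i = j then 1 else 0)"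
    and eig: "\<forall>i\<in>F. A *v u i = of_real (lam i) *s u i" using insert.IH by blast
  define W where "W = {v. \<forall>i\<in>F. ip (u i) v = 0}"
  have Wlin: "v + c *s w \<in> W" if "v \<in> W" "w \<in> W" for v w c
    using that unfolding W_def by (simp add: ip_add_right ip_scale_right)
  have Wscale: "c *s v \<in> W" if "v \<in> W" for v c
    using that unfolding W_def by (simp add: ip_scale_right)
  have "W = (\<Inter>i\<in>F. {v. ip (u i) v = 0})" unfolding W_def by auto
  moreover have "closed {v. ip (u i) v = 0}" for i
    by (rule closed_Collect_eq[OF cont_ip continuous_on_const])
  ultimately have Wclosed: "closed W" by (simp add: closed_INT)
  have AW: "A *v v \<in> W" if "v \<in> W" for v
  proof -
    have "ip (u i) (A *v v) = 0" if i: "i \<in> F" for i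
    proof -
      have "ip (u i) (A *v v) = ip (A *v u i) v" using ip_adj[of "u i" A v] herm by simp
      also have "\<dots> = cnj (of_real (lam i)) * ip (u i) v" using eig i by (simp add: ip_scale_left)
      also have "\<dots> = 0" using \<open>v \<in> W\<close> i unfolding W_def by simp
      finally show ?thesis .
    qed
    thus ?thesis unfolding W_def by blast
  qed
  have "card F < CARD('n)"
  proof -
    have "F \<subset> UNIV" using insert.hyps by blast
    thus ?thesis by (rule psubset_card_mono[OF finite_class.finite_UNIV])
  qed
  then obtain r where r: "r \<noteq> 0" "\<forall>i\<in>F. ip (u i) r = 0"
    using exists_orth[OF orth insert.hyps(1)] by blast
  have rW: "r \<in> W" using r unfolding W_def by blast
  obtain w \<mu> where wW: "w \<in> W" and ww: "ip w w = 1" and Aw: "A *v w = of_real \<mu> *s w"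
    using eig_step[OF herm Wlin Wscale Wclosed AW rW r(1)] by blast
  define u' where "u' = u(x := w)"
  define lam' where "lam' = lam(x := \<mu>)"
  have uw: "ip (u j) w = 0" if "j \<in> F" for j
    using wW that unfolding W_def by blast
  have wu: "ip w (u j) = 0" if "j \<in> F" for j
  proof -
    have "ip w (u j) = cnj (ip (u j) w)" by (simp add: ip_cnj)
    thus ?thesis using uw[OF that] by simp
  qed
  have "\<forall>i\<in>insert x F. \<forall>j\<in>insert x F. ip (u' i) (u' j) = (if i = j then 1 else 0)"
    using orth insert.hyps(2) wu uw ww unfolding u'_def by auto
  moreover have "\<forall>i\<in>insert x F. A *v u' i = of_real (lam' i) *s u' i"
    using eig Aw insert.hyps(2) unfolding u'_def lam'_def by auto
  ultimately show ?case by blast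
qed

lemma spectral:
  fixes A :: "'n::finite cmat"
  assumes herm: "cadj A = A"
  shows "\<exists>V lam. unitary V \<and> A = V ** diagm (\<lambda>i. of_real (lam i)) ** cadj V"
proof -
  obtain u :: "'n \<Rightarrow> complex^'n" and lam :: "'n \<Rightarrow> real" where orth: "\<forall>i\<in>UNIV. \<forall>j\<in>UNIV. ip (u i) (u j) = (if i = j then 1 else 0)"
    and eig: "\<forall>i\<in>UNIV. A *v u i = of_real (lam i) *s u i"
    using eig_family[OF herm finite_class.finite_UNIV] by blast
  define V :: "'n cmat" where "V = (\<chi> a b. u b $ a)"
  have "cadj V ** V = mat 1"
  proof -
    have "(cadj V ** V) $ i $ j = mat 1 $ i $ j" for i j
    proof -
      have "(cadj V ** V) $ i $ j = ip (u i) (u j)"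
        unfolding V_def ip_def matrix_matrix_mult_def by simp
      thus ?thesis using orth by (simp add: mat_def)
    qed
    thus ?thesis by (simp add: vec_eq_iff)
  qed
  hence uV: "unitary V" by (rule unitary_left)
  define D where "D = diagm (\<lambda>i. complex_of_real (lam i))"
  have AV: "A ** V = V ** D"
  proof -
    have "(A ** V) $ a $ b = (V ** D) $ a $ b" for a b
    proof -
      have "(A ** V) $ a $ b = (A *v u b) $ a"
        unfolding V_def matrix_matrix_mult_def matrix_vector_mult_def by simp
      also have "\<dots> = of_real (lam b) * u b $ a" using eig by simp
      finally show ?thesis unfolding D_def mult_diagm_nth V_def by (simp add: mult.commute)
    qed
    thus ?thesis by (simp add: vec_eq_iff)
  qed
  have "A = A ** (V ** cadj V)" using uV by (simp add: unitary_def)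
  also have "\<dots> = V ** D ** cadj V" by (simp add: matrix_mul_assoc AV)
  finally show ?thesis using uV unfolding D_def by blast
qed


lemma unit_simps:
  assumes "unitary U"
  shows "cadj U ** U = mat 1" "U ** cadj U = mat 1"
    "X ** cadj U ** U = X" "X ** U ** cadj U = X"
  using assms unfolding unitary_def
  by (auto simp: matrix_mul_assoc[symmetric])

lemma cadj_conj: "cadj (V ** A ** cadj V) = V ** cadj A ** cadj V"
  by (simp add: cadj_mult matrix_mul_assoc)

lemma cadj_conj': "cadj (cadj V ** A ** V) = cadj V ** cadj A ** V"
  by (simp add: cadj_mult matrix_mul_assoc)

lemma cadj_diagm_real: "cadj (diagm (\<lambda>i. complex_of_real (d i))) = diagm (\<lambda>i. complex_of_real (d i))"
  by (simp add: cadj_diagm)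

lemma psd_conj: "psd A \<Longrightarrow> psd (cadj V ** A ** V)"
  unfolding psd_iff by (simp add: cadj_conj' qf_conj)

lemma psd_conj2: "psd A \<Longrightarrow> psd (V ** A ** cadj V)"
  using psd_conj[of A "cadj V"] by simp

lemma qf_axis: "qf A (axis i 1) = A $ i $ i"
proof -
  have "qf A (axis i 1) = (\<Sum>k\<in>UNIV. if k = i then (A *v axis i 1) $ k else 0)"
    unfolding qf_def by (intro sum.cong) (auto simp: axis_def)
  also have "\<dots> = (A *v axis i 1) $ i" by simp
  also have "\<dots> = (\<Sum>k\<in>UNIV. A$i$k * (if k = i then 1 else 0))"
    by (simp add: matrix_vector_mult_def axis_def)
  also have "\<dots> = (\<Sum>k\<in>UNIV. if k = i then A $ i $ k else 0)"
    by (rule sum.cong) auto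
  also have "\<dots> = A $ i $ i" by simp
  finally show ?thesis .
qed

lemma psd_diag_nonneg: "psd A \<Longrightarrow> 0 \<le> Re (A $ i $ i)"
  using psd_qf[of A "axis i 1"] by (simp add: qf_axis)

lemma herm_diag_real: "cadj A = A \<Longrightarrow> A $ i $ i = complex_of_real (Re (A $ i $ i))"
proof -
  assume h: "cadj A = A"
  have "cnj (A $ i $ i) = A $ i $ i" using arg_cong[OF h, of "\<lambda>M. M $ i $ i"] by simp
  hence "Im (A $ i $ i) = 0" by (metis Reals_cnj_iff complex_is_Real_iff)
  thus ?thesis by (simp add: complex_eq_iff)
qed

lemma qf_diagm: "qf (diagm d) w = (\<Sum>i\<in>UNIV. d i * cnj (w $ i) * w $ i)"
proof -
  have "diagm d *v w = (\<chi> i. d i * w $ i)"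
  proof -
    have "(diagm d *v w) $ i = d i * w $ i" for i
    proof -
      have "(diagm d *v w) $ i = (\<Sum>k\<in>UNIV. (if i = k then d i else 0) * w $ k)"
        unfolding matrix_vector_mult_def by simp
      also have "\<dots> = (\<Sum>k\<in>UNIV. if k = i then d k * w $ k else 0)"
        by (rule sum.cong) auto
      finally have "(diagm d *v w) $ i = (\<Sum>k\<in>UNIV. if k = i then d k * w $ k else 0)" .
      thus ?thesis by simp
    qed
    thus ?thesis by (simp add: vec_eq_iff)
  qed
  thus ?thesis unfolding qf_def by (simp add: mult_ac)
qed

lemma psd_spec:
  assumes "unitary V" "\<And>i. 0 \<le> d i"
  shows "psd (V ** diagm (\<lambda>i. complex_of_real (d i)) ** cadj V)"
proof -
  have "psd (diagm (\<lambda>i. complex_of_real (d i)))"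
  proof -
    have "0 \<le> Re (qf (diagm (\<lambda>i. complex_of_real (d i))) w)" for w
    proof -
      have "Re (qf (diagm (\<lambda>i. complex_of_real (d i))) w) = (\<Sum>i\<in>UNIV. d i * (cmod (w $ i))^2)"
      proof -
        have "qf (diagm (\<lambda>i. complex_of_real (d i))) w = (\<Sum>i\<in>UNIV. complex_of_real (d i * (cmod (w $ i))^2))"
          unfolding qf_diagm
          by (intro sum.cong refl) (metis (no_types, lifting) complex_norm_square mult.assoc mult.commute of_real_mult)
        thus ?thesis by simp
      qed
      also have "\<dots> \<ge> 0" using assms(2) by (intro sum_nonneg) simp
      finally show ?thesis .
    qed
    thus ?thesis unfolding psd_iff by (simp add: cadj_diagm_real)
  qed
  thus ?thesis by (rule psd_conj2)
qed

lemma spectral_psd: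
  assumes "psd A"
  shows "\<exists>V lam. unitary V \<and> (\<forall>i. 0 \<le> lam i) \<and> A = V ** diagm (\<lambda>i. complex_of_real (lam i)) ** cadj V"
proof -
  have h: "cadj A = A" using assms unfolding psd_def by simp
  obtain V lam where V: "unitary V" and A: "A = V ** diagm (\<lambda>i. complex_of_real (lam i)) ** cadj V"
    using spectral[OF h] by blast
  have "cadj V ** A ** V = diagm (\<lambda>i. complex_of_real (lam i))"
    unfolding A using V by (simp add: matrix_mul_assoc unit_simps)
  moreover have "psd (cadj V ** A ** V)" using psd_conj[OF assms] .
  ultimately have "psd (diagm (\<lambda>i. complex_of_real (lam i)))" by simp
  hence "0 \<le> lam i" for i using psd_diag_nonneg[of _ i] by fastforce
  thus ?thesis using V A by blast
qed

lemma spec_diag_bounds: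
  assumes V: "unitary V" and A: "A = V ** diagm (\<lambda>i. complex_of_real (lam i)) ** cadj V"
  shows "cadj V ** A ** V = diagm (\<lambda>i. complex_of_real (lam i))"
  unfolding A using V by (simp add: matrix_mul_assoc unit_simps)

lemma sqrt_unique_aux:
  assumes Z: "unitary Z" and V: "unitary V" and g: "\<And>i. 0 \<le> g i" and l: "\<And>i. 0 \<le> l i"
    and eq: "Z ** diagm (\<lambda>i. complex_of_real ((g i)^2)) ** cadj Z = V ** diagm (\<lambda>i. complex_of_real (l i)) ** cadj V"
  shows "Z ** diagm (\<lambda>i. complex_of_real (g i)) ** cadj Z = V ** diagm (\<lambda>i. complex_of_real (sqrt (l i))) ** cadj V"
proof -
  define Q where "Q = cadj Z ** V"
  have "cadj Z ** (Z ** diagm (\<lambda>i. complex_of_real ((g i)^2)) ** cadj Z) ** V = diagm (\<lambda>i. complex_of_real ((g i)^2)) ** Q"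
    unfolding Q_def using Z by (simp add: matrix_mul_assoc unit_simps)
  moreover have "cadj Z ** (V ** diagm (\<lambda>i. complex_of_real (l i)) ** cadj V) ** V = Q ** diagm (\<lambda>i. complex_of_real (l i))"
    unfolding Q_def using V by (simp add: matrix_mul_assoc unit_simps)
  ultimately have QE: "diagm (\<lambda>i. complex_of_real ((g i)^2)) ** Q = Q ** diagm (\<lambda>i. complex_of_real (l i))"
    using eq by simp
  have QS: "diagm (\<lambda>i. complex_of_real (g i)) ** Q = Q ** diagm (\<lambda>i. complex_of_real (sqrt (l i)))"
  proof -
    have "(diagm (\<lambda>i. complex_of_real (g i)) ** Q) $ k $ m = (Q ** diagm (\<lambda>i. complex_of_real (sqrt (l i)))) $ k $ m" for k m
    proof (cases "Q $ k $ m = 0")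
      case True then show ?thesis by (simp add: diagm_mult_nth mult_diagm_nth)
    next
      case False
      have "complex_of_real ((g k)^2) * Q $ k $ m = Q $ k $ m * complex_of_real (l m)"
        using arg_cong[OF QE, of "\<lambda>M. M $ k $ m"] by (simp add: diagm_mult_nth mult_diagm_nth)
      hence "complex_of_real ((g k)^2) = complex_of_real (l m)" using False by (simp add: mult.commute)
      hence "(g k)^2 = l m" using of_real_eq_iff by blast
      hence "g k = sqrt (l m)" using g[of k] by (metis real_sqrt_unique)
      thus ?thesis by (simp add: diagm_mult_nth mult_diagm_nth mult.commute)
    qed
    thus ?thesis by (simp add: vec_eq_iff)
  qed
  have "Z ** diagm (\<lambda>i. complex_of_real (g i)) ** cadj Z = Z ** diagm (\<lambda>i. complex_of_real (g i)) ** Q ** cadj V"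
    unfolding Q_def using V by (simp add: matrix_mul_assoc unit_simps)
  also have "\<dots> = Z ** (diagm (\<lambda>i. complex_of_real (g i)) ** Q) ** cadj V" by (simp add: matrix_mul_assoc)
  also have "\<dots> = Z ** Q ** diagm (\<lambda>i. complex_of_real (sqrt (l i))) ** cadj V" unfolding QS by (simp add: matrix_mul_assoc)
  also have "Z ** Q = V" unfolding Q_def using Z by (simp add: matrix_mul_assoc unit_simps)
  finally show ?thesis .
qed

lemma msqrt_spec:
  assumes V: "unitary V" and l: "\<And>i. 0 \<le> l i"
    and A: "A = V ** diagm (\<lambda>i. complex_of_real (l i)) ** cadj V"
  shows "msqrt A = V ** diagm (\<lambda>i. complex_of_real (sqrt (l i))) ** cadj V"
  unfolding msqrt_def
proof (rule the_equality)
  let ?B = "V ** diagm (\<lambda>i. complex_of_real (sqrt (l i))) ** cadj V"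
  show "psd ?B \<and> ?B ** ?B = A"
  proof
    show "psd ?B" using psd_spec[OF V, of "\<lambda>i. sqrt (l i)"] l by simp
    have "?B ** ?B = V ** (diagm (\<lambda>i. complex_of_real (sqrt (l i))) ** (cadj V ** V) ** diagm (\<lambda>i. complex_of_real (sqrt (l i)))) ** cadj V"
      by (simp add: matrix_mul_assoc)
    also have "\<dots> = V ** diagm (\<lambda>i. complex_of_real (sqrt (l i)) * complex_of_real (sqrt (l i))) ** cadj V"
      using V l by (simp add: unit_simps diagm_mult)
    also have "(\<lambda>i. complex_of_real (sqrt (l i)) * complex_of_real (sqrt (l i))) = (\<lambda>i. complex_of_real (l i))"
    proof -
      have "complex_of_real (sqrt (l i)) * complex_of_real (sqrt (l i)) = complex_of_real (l i)" for i
      proof -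
        have "sqrt (l i) * sqrt (l i) = l i" using l[of i] by simp
        hence "complex_of_real (sqrt (l i) * sqrt (l i)) = complex_of_real (l i)" by (rule arg_cong)
        thus ?thesis by (simp only: of_real_mult)
      qed
      thus ?thesis by (simp add: fun_eq_iff)
    qed
    finally show "?B ** ?B = A" using A by simp
  qed
next
  fix C assume C: "psd C \<and> C ** C = A"
  obtain Z g where Z: "unitary Z" and g: "\<forall>i. 0 \<le> g i" and Cd: "C = Z ** diagm (\<lambda>i. complex_of_real (g i)) ** cadj Z"
    using spectral_psd[of C] C by blast
  have "C ** C = Z ** (diagm (\<lambda>i. complex_of_real (g i)) ** (cadj Z ** Z) ** diagm (\<lambda>i. complex_of_real (g i))) ** cadj Z"
    unfolding Cd by (simp add: matrix_mul_assoc)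
  also have "\<dots> = Z ** diagm (\<lambda>i. complex_of_real ((g i)^2)) ** cadj Z"
    using Z by (simp add: unit_simps diagm_mult power2_eq_square)
  finally have "Z ** diagm (\<lambda>i. complex_of_real ((g i)^2)) ** cadj Z = V ** diagm (\<lambda>i. complex_of_real (l i)) ** cadj V"
    using C A by simp
  from sqrt_unique_aux[OF Z V _ l this] g Cd show "C = V ** diagm (\<lambda>i. complex_of_real (sqrt (l i))) ** cadj V" by simp
qed


lemma amgm_complex:
  fixes x y :: complex and s :: real
  assumes s: "s > 0"
  shows "Re (x * y) \<le> (s * (cmod x)^2 + (cmod y)^2 / s) / 2"
proof -
  have "Re (x * y) \<le> cmod x * cmod y" by (metis complex_Re_le_cmod norm_mult)
  moreover have "2 * (cmod x * cmod y) \<le> s * (cmod x)^2 + (cmod y)^2 / s"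
  proof -
    have "0 \<le> (s * cmod x - cmod y)^2" by simp
    hence "2 * s * (cmod x * cmod y) \<le> s * (s * (cmod x)^2) + (cmod y)^2"
      by (simp add: power2_eq_square algebra_simps)
    hence "2 * s * (cmod x * cmod y) \<le> s * (s * (cmod x)^2 + (cmod y)^2 / s)"
      using s by (simp add: algebra_simps)
    thus ?thesis using s by (simp add: mult.assoc)
  qed
  ultimately show ?thesis by simp
qed

lemma cm1: "z * cnj z = (complex_of_real (cmod z))^2"
  using complex_norm_square[of z] by simp

lemma cm2: "cnj z * z = (complex_of_real (cmod z))^2"
  using complex_norm_square[of z] by (simp add: mult.commute)

lemma conj_entry:
  "(Z ** diagm d ** cadj Z) $ a $ b = (\<Sum>m\<in>UNIV. Z $ a $ m * d m * cnj (Z $ b $ m))"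
proof -
  have "(Z ** diagm d ** cadj Z) $ a $ b = (\<Sum>k\<in>UNIV. (Z ** diagm d) $ a $ k * cadj Z $ k $ b)"
    by (simp only: matrix_matrix_mult_def[of "Z ** diagm d" "cadj Z"] vec_lambda_beta)
  thus ?thesis by (simp add: mult_diagm_nth)
qed

lemma colnorm:
  assumes P: "psd P" and P1: "psd (mat 1 - P)"
  shows "(\<Sum>k\<in>UNIV. (cmod (P $ k $ l))^2) \<le> 1"
proof -
  obtain Z pi where Z: "unitary Z" and pi0: "\<forall>i. 0 \<le> pi i"
    and Pd: "P = Z ** diagm (\<lambda>i. complex_of_real (pi i)) ** cadj Z"
    using spectral_psd[OF P] by blast
  have "cadj Z ** (mat 1 - P) ** Z = mat 1 - diagm (\<lambda>i. complex_of_real (pi i))"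
    unfolding Pd using Z
    by (simp add: matrix_diff_ldistrib matrix_diff_rdistrib matrix_mul_assoc unit_simps)
  hence "psd (mat 1 - diagm (\<lambda>i. complex_of_real (pi i)))" using psd_conj[OF P1, of Z] by simp
  hence pi1: "pi m \<le> 1" for m using psd_diag_nonneg[of _ m] by (fastforce simp: mat_def)
  have herm: "cadj P = P" using P unfolding psd_def by simp
  have "(\<Sum>k\<in>UNIV. (cmod (P $ k $ l))^2) = Re (\<Sum>k\<in>UNIV. P $ l $ k * P $ k $ l)"
  proof -
    have "P $ l $ k = cnj (P $ k $ l)" for k using arg_cong[OF herm, of "\<lambda>M. M $ l $ k"] by simp
    hence "(\<Sum>k\<in>UNIV. P $ l $ k * P $ k $ l) = (\<Sum>k\<in>UNIV. complex_of_real ((cmod (P $ k $ l))^2))"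
      by (simp add: cm1 cm2 mult.commute)
    thus ?thesis by simp
  qed
  also have "(\<Sum>k\<in>UNIV. P $ l $ k * P $ k $ l) = (P ** P) $ l $ l"
    by (simp add: matrix_matrix_mult_def)
  also have "P ** P = Z ** diagm (\<lambda>i. complex_of_real ((pi i)^2)) ** cadj Z"
  proof -
    have "P ** P = Z ** (diagm (\<lambda>i. complex_of_real (pi i)) ** (cadj Z ** Z) ** diagm (\<lambda>i. complex_of_real (pi i))) ** cadj Z"
      unfolding Pd by (simp add: matrix_mul_assoc)
    thus ?thesis using Z by (simp add: unit_simps diagm_mult power2_eq_square)
  qed
  also have "Re ((Z ** diagm (\<lambda>i. complex_of_real ((pi i)^2)) ** cadj Z) $ l $ l) = (\<Sum>m\<in>UNIV. (pi m)^2 * (cmod (Z $ l $ m))^2)"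
  proof -
    have "(Z ** diagm (\<lambda>i. complex_of_real ((pi i)^2)) ** cadj Z) $ l $ l = (\<Sum>m\<in>UNIV. complex_of_real ((pi m)^2 * (cmod (Z $ l $ m))^2))"
      unfolding conj_entry by (intro sum.cong refl) (simp add: cm1 cm2 mult_ac)
    thus ?thesis by simp
  qed
  also have "\<dots> \<le> (\<Sum>m\<in>UNIV. (cmod (Z $ l $ m))^2)"
  proof (intro sum_mono)
    fix m
    have "(pi m)^2 \<le> 1" using pi0 pi1[of m] by (simp add: power_le_one)
    thus "(pi m)^2 * (cmod (Z $ l $ m))^2 \<le> (cmod (Z $ l $ m))^2"
      by (simp add: mult_left_le_one_le)
  qed
  also have "\<dots> = 1"
  proof -
    have "(Z ** cadj Z) $ l $ l = (\<Sum>m\<in>UNIV. complex_of_real ((cmod (Z $ l $ m))^2))"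
      by (simp add: matrix_matrix_mult_def cm1 cm2)
    moreover have "(Z ** cadj Z) $ l $ l = 1" using Z by (simp add: unit_simps mat_def)
    ultimately have "(\<Sum>m\<in>UNIV. complex_of_real ((cmod (Z $ l $ m))^2)) = 1" by simp
    hence "Re (\<Sum>m\<in>UNIV. complex_of_real ((cmod (Z $ l $ m))^2)) = 1" by simp
    thus ?thesis by simp
  qed
  finally show ?thesis .
qed

lemma trace_prod_entries: "ctrace (A ** B) = (\<Sum>l\<in>UNIV. \<Sum>k\<in>UNIV. A $ k $ l * B $ l $ k)"
  unfolding ctrace_def matrix_matrix_mult_def by simp (rule sum.swap)

lemma PK:
  fixes P K :: "'n::finite cmat"
  assumes V: "unitary V" and beta: "\<And>l. \<beta> l > 0"
    and P: "psd P" and P1: "psd (mat 1 - P)" and K: "cadj K = K" and a: "a > 0"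
  shows "Re (ctrace (P ** K)) \<le> (a * (\<Sum>l\<in>UNIV. \<beta> l) +
           Re (ctrace ((V ** diagm (\<lambda>l. complex_of_real (1 / \<beta> l)) ** cadj V) ** K ** K)) / a) / 2"
proof -
  define P' where "P' = cadj V ** P ** V"
  define K' where "K' = cadj V ** K ** V"
  define Di where "Di = diagm (\<lambda>l. complex_of_real (1 / \<beta> l))"
  have trPK: "ctrace (P ** K) = ctrace (P' ** K')"
  proof -
    have "P' ** K' = cadj V ** (P ** K) ** V" unfolding P'_def K'_def using V
      by (simp add: matrix_mul_assoc unit_simps)
    thus ?thesis using ctrace_conj_unitary'[OF V] by simp
  qed
  have trK: "ctrace ((V ** Di ** cadj V) ** K ** K) = ctrace (Di ** (K' ** K'))"
  proof -
    have "Di ** (K' ** K') = cadj V ** ((V ** Di ** cadj V) ** K ** K) ** V" unfolding K'_def using V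
      by (simp add: matrix_mul_assoc unit_simps)
    thus ?thesis using ctrace_conj_unitary'[OF V] by simp
  qed
  have P'1: "psd (mat 1 - P')"
  proof -
    have "cadj V ** (mat 1 - P) ** V = mat 1 - P'" unfolding P'_def using V
      by (simp add: matrix_diff_ldistrib matrix_diff_rdistrib matrix_mul_assoc unit_simps)
    thus ?thesis using psd_conj[OF P1, of V] by simp
  qed
  have col: "(\<Sum>k\<in>UNIV. (cmod (P' $ k $ l))^2) \<le> 1" for l
  proof -
    have "psd P'" unfolding P'_def by (rule psd_conj[OF P])
    thus ?thesis using colnorm P'1 by blast
  qed
  have K'h: "K' $ k $ l = cnj (K' $ l $ k)" for k l
  proof -
    have "cadj K' = K'" unfolding K'_def using K by (simp add: cadj_conj')
    from arg_cong[OF this, of "\<lambda>M. M $ k $ l"] show ?thesis by simp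
  qed
  define c where "c l = (\<Sum>k\<in>UNIV. (cmod (K' $ l $ k))^2)" for l
  have rhs: "Re (ctrace (Di ** (K' ** K'))) = (\<Sum>l\<in>UNIV. c l / \<beta> l)"
  proof -
    have "(Di ** (K' ** K')) $ l $ l = complex_of_real (c l / \<beta> l)" for l
    proof -
      have "(K' ** K') $ l $ l = (\<Sum>k\<in>UNIV. K' $ l $ k * cnj (K' $ l $ k))"
        by (simp add: matrix_matrix_mult_def K'h[of _ l])
      also have "\<dots> = complex_of_real (c l)" unfolding c_def by (simp add: cm1)
      finally show ?thesis unfolding Di_def diagm_mult_nth by simp
    qed
    thus ?thesis unfolding ctrace_def by simp
  qed
  have perl: "(\<Sum>k\<in>UNIV. Re (P' $ k $ l * K' $ l $ k)) \<le> (a * \<beta> l + c l / \<beta> l / a) / 2" for l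
  proof -
    have s: "a * \<beta> l > 0" using a beta[of l] by simp
    have "(\<Sum>k\<in>UNIV. Re (P' $ k $ l * K' $ l $ k)) \<le>
          (\<Sum>k\<in>UNIV. (a * \<beta> l * (cmod (P' $ k $ l))^2 + (cmod (K' $ l $ k))^2 / (a * \<beta> l)) / 2)"
      by (intro sum_mono amgm_complex s)
    also have "\<dots> = (a * \<beta> l * (\<Sum>k\<in>UNIV. (cmod (P' $ k $ l))^2) + c l / (a * \<beta> l)) / 2"
    proof -
      have "(\<Sum>k\<in>UNIV. (a * \<beta> l * (cmod (P' $ k $ l))^2 + (cmod (K' $ l $ k))^2 / (a * \<beta> l)) / 2)
        = ((\<Sum>k\<in>UNIV. a * \<beta> l * (cmod (P' $ k $ l))^2) + (\<Sum>k\<in>UNIV. (cmod (K' $ l $ k))^2 / (a * \<beta> l))) / 2"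
        by (simp add: sum_divide_distrib[symmetric] sum.distrib)
      also have "(\<Sum>k\<in>UNIV. a * \<beta> l * (cmod (P' $ k $ l))^2) = a * \<beta> l * (\<Sum>k\<in>UNIV. (cmod (P' $ k $ l))^2)"
        by (simp add: sum_distrib_left)
      also have "(\<Sum>k\<in>UNIV. (cmod (K' $ l $ k))^2 / (a * \<beta> l)) = c l / (a * \<beta> l)"
        unfolding c_def by (simp add: sum_divide_distrib)
      finally show ?thesis .
    qed
    also have "\<dots> \<le> (a * \<beta> l * 1 + c l / (a * \<beta> l)) / 2"
      using col[of l] s by (intro divide_right_mono add_right_mono mult_left_mono) auto
    also have "\<dots> = (a * \<beta> l + c l / \<beta> l / a) / 2" by simp
    finally show ?thesis .
  qed
  have "Re (ctrace (P ** K)) = (\<Sum>l\<in>UNIV. \<Sum>k\<in>UNIV. Re (P' $ k $ l * K' $ l $ k))"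
    by (simp only: trPK trace_prod_entries[of P' K'] Re_sum)
  also have "\<dots> \<le> (\<Sum>l\<in>UNIV. (a * \<beta> l + c l / \<beta> l / a) / 2)"
    by (intro sum_mono perl)
  also have "\<dots> = (a * (\<Sum>l\<in>UNIV. \<beta> l) + (\<Sum>l\<in>UNIV. c l / \<beta> l) / a) / 2"
  proof -
    have "(\<Sum>l\<in>UNIV. (a * \<beta> l + c l / \<beta> l / a) / 2) = ((\<Sum>l\<in>UNIV. a * \<beta> l) + (\<Sum>l\<in>UNIV. c l / \<beta> l / a)) / 2"
      by (simp add: sum_divide_distrib[symmetric] sum.distrib)
    also have "(\<Sum>l\<in>UNIV. a * \<beta> l) = a * (\<Sum>l\<in>UNIV. \<beta> l)" by (simp add: sum_distrib_left)
    also have "(\<Sum>l\<in>UNIV. c l / \<beta> l / a) = (\<Sum>l\<in>UNIV. c l / \<beta> l) / a" by (simp add: sum_divide_distrib)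
    finally show ?thesis .
  qed
  also have "\<dots> = (a * (\<Sum>l\<in>UNIV. \<beta> l) + Re (ctrace ((V ** Di ** cadj V) ** K ** K)) / a) / 2"
    unfolding trK rhs ..
  finally show ?thesis unfolding Di_def .
qed


lemma expect_finite_sum:
  fixes f :: "'a \<Rightarrow> real"
  assumes "finite (set_pmf A)"
  shows "measure_pmf.expectation A f = (\<Sum>a\<in>set_pmf A. f a * pmf A a)"
  by (rule integral_measure_pmf_real[OF assms]) auto

lemma expect_pair_prod:
  fixes f :: "'a \<Rightarrow> real" and h :: "'b \<Rightarrow> real"
  assumes fA: "finite (set_pmf A)" and fB: "finite (set_pmf B)"
  shows "measure_pmf.expectation (pair_pmf A B) (\<lambda>x. f (fst x) * h (snd x)) =
         measure_pmf.expectation A f * measure_pmf.expectation B h"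
proof -
  have fAB: "finite (set_pmf (pair_pmf A B))" using fA fB by simp
  have "measure_pmf.expectation (pair_pmf A B) (\<lambda>x. f (fst x) * h (snd x)) =
        (\<Sum>x\<in>set_pmf A \<times> set_pmf B. f (fst x) * h (snd x) * pmf (pair_pmf A B) x)"
    using expect_finite_sum[OF fAB] by simp
  also have "\<dots> = (\<Sum>(a,b)\<in>set_pmf A \<times> set_pmf B. (f a * pmf A a) * (h b * pmf B b))"
    by (intro sum.cong refl) (auto simp: pmf_pair mult_ac)
  also have "\<dots> = (\<Sum>a\<in>set_pmf A. \<Sum>b\<in>set_pmf B. (f a * pmf A a) * (h b * pmf B b))"
    by (rule sum.cartesian_product[symmetric])
  also have "\<dots> = (\<Sum>a\<in>set_pmf A. f a * pmf A a) * (\<Sum>b\<in>set_pmf B. h b * pmf B b)"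
    by (simp add: sum_product)
  also have "\<dots> = measure_pmf.expectation A f * measure_pmf.expectation B h"
    using expect_finite_sum[OF fA] expect_finite_sum[OF fB] by simp
  finally show ?thesis .
qed

lemma finite_Pi_support:
  assumes "finite A" "finite (set_pmf q)"
  shows "finite (set_pmf (Pi_pmf A d (\<lambda>_. q)))"
  using assms by (simp add: set_Pi_pmf finite_PiE_dflt)

lemma expect_component:
  fixes f :: "'b \<Rightarrow> real"
  assumes "finite A" "j \<in> A"
  shows "measure_pmf.expectation (Pi_pmf A d (\<lambda>_. q)) (\<lambda>D. f (D j)) = measure_pmf.expectation q f"
proof -
  have "measure_pmf.expectation (Pi_pmf A d (\<lambda>_. q)) (\<lambda>D. f (D j)) =
        measure_pmf.expectation (map_pmf (\<lambda>D. D j) (Pi_pmf A d (\<lambda>_. q))) f" by simp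
  also have "map_pmf (\<lambda>D. D j) (Pi_pmf A d (\<lambda>_. q)) = q" using Pi_pmf_component[OF assms(1), of j d "\<lambda>_. q"] assms(2) by simp
  finally show ?thesis .
qed

definition rad :: "real pmf" where "rad = pmf_of_set {-1, 1}"

lemma set_rad: "set_pmf rad = {-1, 1}" unfolding rad_def by simp

lemma expect_rad: "measure_pmf.expectation rad (\<lambda>y. y) = 0"
  unfolding rad_def by (simp add: integral_pmf_of_set)

lemma expect_rad_sq: "measure_pmf.expectation rad (\<lambda>y. y * y) = 1"
  unfolding rad_def by (simp add: integral_pmf_of_set)

lemma expect_rad_1p: "measure_pmf.expectation rad (\<lambda>y. 1 + y) = 1"
  unfolding rad_def by (simp add: integral_pmf_of_set)

lemma sigma_mean:
  fixes N :: nat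
  assumes "j < N"
  shows "measure_pmf.expectation (Pi_pmf {..<N} d (\<lambda>_. rad)) (\<lambda>s. s j) = 0"
  using expect_component[of "{..<N}" j d rad "\<lambda>y. y", OF finite_lessThan] assms expect_rad by simp

lemma sigma_sq:
  fixes N :: nat
  assumes "j < N"
  shows "measure_pmf.expectation (Pi_pmf {..<N} d (\<lambda>_. rad)) (\<lambda>s. s j * s j) = 1"
  using expect_component[of "{..<N}" j d rad "\<lambda>y. y * y", OF finite_lessThan] assms expect_rad_sq by simp

lemma sigma_cross:
  fixes N :: nat
  assumes j: "j < N" and k: "k < N" and jk: "j \<noteq> k"
  shows "measure_pmf.expectation (Pi_pmf {..<N} d (\<lambda>_. rad)) (\<lambda>s. s j * s k) = 0"
proof -
  let ?P = "Pi_pmf {..<N} d (\<lambda>_. rad)"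
  have fin: "finite (set_pmf ?P)" by (intro finite_Pi_support) (auto simp: set_rad)
  have int: "integrable (measure_pmf ?P) f" for f :: "_ \<Rightarrow> real"
    by (rule integrable_measure_pmf_finite[OF fin])
  define f where "f x y = (if x = j \<or> x = k then 1 + y else (1::real))" for x y
  have prod: "(\<Prod>x\<in>{..<N}. f x (s x)) = (1 + s j) * (1 + s k)" for s :: "nat \<Rightarrow> real"
  proof -
    have "(\<Prod>x\<in>{..<N}. f x (s x)) = (\<Prod>x\<in>{j, k}. f x (s x))"
      by (rule prod.mono_neutral_right) (auto simp: f_def j k)
    thus ?thesis using jk by (simp add: f_def)
  qed
  have "measure_pmf.expectation ?P (\<lambda>s. \<Prod>x\<in>{..<N}. f x (s x)) = (\<Prod>x\<in>{..<N}. measure_pmf.expectation rad (f x))"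
    by (rule expectation_prod_Pi_pmf) (auto simp: f_def set_rad integrable_measure_pmf_finite)
  also have "\<dots> = 1"
  proof (intro prod.neutral ballI)
    fix x
    show "measure_pmf.expectation rad (f x) = 1"
    proof (cases "x = j \<or> x = k")
      case True
      hence "f x = (\<lambda>y. 1 + y)" by (simp add: f_def fun_eq_iff)
      thus ?thesis by (simp add: expect_rad_1p)
    next
      case False
      hence "f x = (\<lambda>y. 1)" by (simp add: f_def fun_eq_iff)
      thus ?thesis by simp
    qed
  qed
  finally have e1: "measure_pmf.expectation ?P (\<lambda>s. (1 + s j) * (1 + s k)) = 1"
    by (simp add: prod)
  have "measure_pmf.expectation ?P (\<lambda>s. (1 + s j) * (1 + s k)) =
        measure_pmf.expectation ?P (\<lambda>s. 1 + s j + s k + s j * s k)"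
    by (simp add: algebra_simps)
  also have "\<dots> = 1 + measure_pmf.expectation ?P (\<lambda>s. s j) + measure_pmf.expectation ?P (\<lambda>s. s k)
        + measure_pmf.expectation ?P (\<lambda>s. s j * s k)"
    by (simp add: int)
  also have "\<dots> = 1 + measure_pmf.expectation ?P (\<lambda>s. s j * s k)"
    using sigma_mean[OF j] sigma_mean[OF k] by simp
  finally show ?thesis using e1 by simp
qed


lemma qf_add: "qf (A + B) v = qf A v + qf B v"
  unfolding qf_ip by (simp add: matrix_vector_mult_def ip_def vec_eq_iff sum.distrib distrib_left distrib_right)

lemma scaleR_mat_eq: "r *\<^sub>R (A::'n::finite cmat) = (\<chi> i j. of_real r * A $ i $ j)"
  by (simp add: vec_eq_iff) (simp add: scaleR_conv_of_real)

lemma qf_scaleR: "qf (r *\<^sub>R A) v = of_real r * qf A v"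
  unfolding qf_def matrix_vector_mult_def scaleR_mat_eq
  by (simp add: sum_distrib_left mult_ac)

lemma psd_add: "psd A \<Longrightarrow> psd B \<Longrightarrow> psd (A + B)"
  unfolding psd_iff by (simp add: cadj_add qf_add add_nonneg_nonneg)

lemma psd_scaleR: "psd A \<Longrightarrow> 0 \<le> r \<Longrightarrow> psd (r *\<^sub>R A)"
  unfolding psd_iff by (simp add: cadj_scaleR qf_scaleR)

lemma psd_zero: "psd (0 :: 'n::finite cmat)"
  unfolding psd_iff by (simp add: qf_def matrix_vector_mult_def)

lemma psd_sum: "(\<And>x. x \<in> X \<Longrightarrow> psd (f x)) \<Longrightarrow> psd (\<Sum>x\<in>X. f x)"
  by (induction X rule: infinite_finite_induct) (auto simp: psd_zero psd_add)

lemma proj0_diag: "proj0 i0 = diagm (\<lambda>j. complex_of_real (if j = i0 then 1 else 0))"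
  by (simp add: proj0_def diagm_def vec_eq_iff)

lemma psd_proj0: "psd (proj0 i0)"
proof -
  have "psd (mat 1 ** diagm (\<lambda>j. complex_of_real (if j = i0 then 1 else 0)) ** cadj (mat 1))"
    by (rule psd_spec[OF unitary_mat1]) simp
  thus ?thesis by (simp add: cadj_mat proj0_diag)
qed

lemma proj0_idem: "proj0 i0 ** proj0 i0 = proj0 i0"
  unfolding proj0_diag diagm_mult by (simp add: vec_eq_iff)

lemma ctrace_proj0: "ctrace (proj0 i0) = 1"
  unfolding proj0_def ctrace_def by simp

lemma kappa_psd: "unitary (S x) \<Longrightarrow> psd (kappa i0 S x)"
  unfolding kappa_def by (rule psd_conj2[OF psd_proj0])

lemma kappa_idem: "unitary (S x) \<Longrightarrow> kappa i0 S x ** kappa i0 S x = kappa i0 S x"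
proof -
  assume u: "unitary (S x)"
  have "kappa i0 S x ** kappa i0 S x = S x ** (proj0 i0 ** (cadj (S x) ** S x) ** proj0 i0) ** cadj (S x)"
    unfolding kappa_def by (simp add: matrix_mul_assoc)
  also have "\<dots> = kappa i0 S x" using u unfolding kappa_def by (simp add: unit_simps proj0_idem)
  finally show ?thesis .
qed

lemma kappa_trace: "unitary (S x) \<Longrightarrow> ctrace (kappa i0 S x) = 1"
  unfolding kappa_def by (simp add: ctrace_conj_unitary ctrace_proj0)

lemma herm_sum_scaleR: "(\<And>j. j \<in> J \<Longrightarrow> cadj (X j) = X j) \<Longrightarrow> cadj (\<Sum>j\<in>J. c j *\<^sub>R X j) = (\<Sum>j\<in>J. c j *\<^sub>R X j)"
  by (simp add: cadj_sum cadj_scaleR)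

lemma re_tr_KK:
  fixes B :: "'n::finite cmat"
  shows "Re (ctrace (B ** (\<Sum>j\<in>J. c j *\<^sub>R X j) ** (\<Sum>j\<in>J. c j *\<^sub>R X j))) =
         (\<Sum>j\<in>J. \<Sum>k\<in>J. c j * c k * Re (ctrace (B ** X j ** X k)))"
proof -
  have "B ** (\<Sum>j\<in>J. c j *\<^sub>R X j) ** (\<Sum>j\<in>J. c j *\<^sub>R X j) =
        (\<Sum>j\<in>J. \<Sum>k\<in>J. (c j * c k) *\<^sub>R (B ** X j ** X k))"
  proof -
    have "B ** (\<Sum>j\<in>J. c j *\<^sub>R X j) = (\<Sum>j\<in>J. c j *\<^sub>R (B ** X j))"
      by (simp add: matrix_sum_right matrix_scaleR_right)
    hence "B ** (\<Sum>j\<in>J. c j *\<^sub>R X j) ** (\<Sum>k\<in>J. c k *\<^sub>R X k) =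
       (\<Sum>j\<in>J. c j *\<^sub>R (B ** X j ** (\<Sum>k\<in>J. c k *\<^sub>R X k)))"
      by (simp add: matrix_sum_left matrix_scaleR_left)
    also have "\<dots> = (\<Sum>j\<in>J. c j *\<^sub>R (\<Sum>k\<in>J. c k *\<^sub>R (B ** X j ** X k)))"
      by (simp add: matrix_sum_right matrix_scaleR_right)
    also have "\<dots> = (\<Sum>j\<in>J. \<Sum>k\<in>J. (c j * c k) *\<^sub>R (B ** X j ** X k))"
      by (simp add: scaleR_sum_right)
    finally show ?thesis .
  qed
  thus ?thesis by (simp add: ctrace_sum ctrace_scaleR Re_sum)
qed

lemma re_tr_lin:
  fixes M :: "'n::finite cmat"
  shows "Re (ctrace (M ** (\<Sum>j\<in>J. c j *\<^sub>R X j))) = (\<Sum>j\<in>J. c j * Re (ctrace (M ** X j)))"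
  by (simp add: matrix_sum_right matrix_scaleR_right ctrace_sum ctrace_scaleR Re_sum)


definition zf :: "nat \<times> 'x \<Rightarrow> real" where "zf cx = (if fst cx = 0 then 1 else 0)"
definition tt :: "nat \<Rightarrow> real" where "tt c = (if c = 0 then -1 else 1)"
definition gf :: "'n::finite cmat \<Rightarrow> ('x \<Rightarrow> 'n cmat) \<Rightarrow> nat \<times> 'x \<Rightarrow> nat \<times> 'x \<Rightarrow> real" where
  "gf B k cx cy = tt (fst cx) * tt (fst cy) * Re (ctrace (B ** k (snd cx) ** k (snd cy)))"

lemma psd_mat1: "psd (mat 1 :: 'n::finite cmat)"
  unfolding psd_iff by (simp add: cadj_mat qf_ip Re_ip_self_nonneg)

lemma povms_ne: "binary_povms \<noteq> {}"
proof -
  have "(\<lambda>c. if c = 0 then mat 1 else 0) \<in> binary_povms"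
    unfolding binary_povms_def by (simp add: psd_mat1 psd_zero)
  thus ?thesis by blast
qed

lemma pointwise:
  fixes N :: nat and \<Theta> :: "(nat \<Rightarrow> 'p) set" and Ul :: "nat \<Rightarrow> 'p \<Rightarrow> complex^'n::finite^'n"
    and S :: "'x \<Rightarrow> complex^'n^'n" and D :: "nat \<Rightarrow> nat \<times> 'x" and \<sigma> :: "nat \<Rightarrow> real"
  assumes Theta_ne: "\<Theta> \<noteq> {}"
    and layers_unitary: "\<And>l a. unitary (Ul l a)"
    and S_unitary: "\<And>x. unitary (S x)"
    and rho_def: "\<And>\<theta> x. \<rho> \<theta> x =
        layer_prod L Ul \<theta> ** S x ** proj0 i0 ** cadj (S x) ** cadj (layer_prod L Ul \<theta>)"
    and V: "unitary V" and beta: "\<And>l. \<beta> l > 0" and a: "a > 0" and N: "N > 0"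
    and Dsupp: "\<And>j. j < N \<Longrightarrow> fst (D j) \<in> {0,1}"
  shows "(SUP tm\<in>\<Theta> \<times> binary_povms. (\<Sum>j<N. \<sigma> j * loss \<rho> (fst tm) (snd tm) (D j)) / sqrt (real N)) \<le>
    ((\<Sum>j<N. zf (D j) * \<sigma> j) + (a * (\<Sum>l\<in>UNIV. \<beta> l) +
      (\<Sum>j<N. \<Sum>k<N. gf (V ** diagm (\<lambda>l. complex_of_real (1 / \<beta> l)) ** cadj V) (kappa i0 S) (D j) (D k) * (\<sigma> j * \<sigma> k)) / a) / 2)
     / sqrt (real N)"
proof (rule cSUP_least)
  show "\<Theta> \<times> binary_povms \<noteq> {}" using Theta_ne povms_ne by blast
next
  fix tm assume tm: "tm \<in> \<Theta> \<times> (binary_povms :: (nat \<Rightarrow> 'n cmat) set)"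
  define \<theta> where "\<theta> = fst tm"
  define M where "M = snd tm"
  have M: "psd (M 0)" "psd (M 1)" "M 0 + M 1 = mat 1" using tm unfolding M_def binary_povms_def by auto
  define U where "U = layer_prod L Ul \<theta>"
  have U: "unitary U" unfolding U_def by (rule layer_prod_unitary[OF layers_unitary])
  define \<kappa> where "\<kappa> = kappa i0 S"
  define Binv where "Binv = V ** diagm (\<lambda>l. complex_of_real (1 / \<beta> l)) ** cadj V"
  have rho: "\<rho> \<theta> x = U ** \<kappa> x ** cadj U" for x
    unfolding rho_def U_def \<kappa>_def kappa_def by (simp add: matrix_mul_assoc)
  have trrho: "ctrace (\<rho> \<theta> x) = 1" for x
    unfolding rho using U S_unitary by (simp add: ctrace_conj_unitary \<kappa>_def kappa_trace)
  have M1: "M 1 = mat 1 - M 0" using M(3) by (simp add: algebra_simps)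
  define c where "c j = \<sigma> j * tt (fst (D j))" for j
  have loss_eq: "\<sigma> j * loss \<rho> \<theta> M (D j) = zf (D j) * \<sigma> j + c j * Re (ctrace (M 0 ** \<rho> \<theta> (snd (D j))))"
    if j: "j < N" for j
  proof -
    obtain cc x where Dj: "D j = (cc, x)" by fastforce
    have "cc \<in> {0,1}" using Dsupp[OF j] Dj by simp
    then consider "cc = 0" | "cc = 1" by blast
    thus ?thesis
    proof cases
      case 1 thus ?thesis unfolding loss_def c_def Dj by (simp add: zf_def tt_def algebra_simps)
    next
      case 2
      have "ctrace (M 1 ** \<rho> \<theta> x) = 1 - ctrace (M 0 ** \<rho> \<theta> x)"
        unfolding M1 by (simp add: matrix_diff_rdistrib ctrace_diff trrho)
      hence "Re (ctrace (M 1 ** \<rho> \<theta> x)) = 1 - Re (ctrace (M 0 ** \<rho> \<theta> x))"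
        by (metis minus_complex.simps(1) one_complex.simps(1))
      hence l1: "loss \<rho> \<theta> M (1, x) = Re (ctrace (M 0 ** \<rho> \<theta> x))" unfolding loss_def by simp
      show ?thesis unfolding c_def Dj using 2 l1 by (simp add: zf_def tt_def)
    qed
  qed
  define K where "K = (\<Sum>j<N. c j *\<^sub>R \<kappa> (snd (D j)))"
  have kh: "cadj (\<kappa> x) = \<kappa> x" for x
    using kappa_psd[where S=S and x=x] S_unitary[of x] unfolding psd_def \<kappa>_def by blast
  have Kh: "cadj K = K" unfolding K_def
    by (rule herm_sum_scaleR) (rule kh)
  define P where "P = cadj U ** M 0 ** U"
  have P: "psd P" unfolding P_def by (rule psd_conj[OF M(1)])
  have P1: "psd (mat 1 - P)"
  proof -
    have "cadj U ** M 1 ** U = mat 1 - P" unfolding M1 P_def using U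
      by (simp add: matrix_diff_ldistrib matrix_diff_rdistrib matrix_mul_assoc unit_simps)
    thus ?thesis using psd_conj[OF M(2), of U] by simp
  qed
  have "(\<Sum>j<N. c j * Re (ctrace (M 0 ** \<rho> \<theta> (snd (D j))))) = Re (ctrace (M 0 ** (\<Sum>j<N. c j *\<^sub>R \<rho> \<theta> (snd (D j)))))"
    by (simp add: re_tr_lin)
  also have "(\<Sum>j<N. c j *\<^sub>R \<rho> \<theta> (snd (D j))) = U ** K ** cadj U"
    unfolding K_def rho by (simp add: matrix_sum_left matrix_sum_right matrix_scaleR_left matrix_scaleR_right)
  also have "ctrace (M 0 ** (U ** K ** cadj U)) = ctrace (P ** K)"
  proof -
    have "ctrace (M 0 ** (U ** K ** cadj U)) = ctrace ((M 0 ** U ** K) ** cadj U)"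
      by (simp add: matrix_mul_assoc)
    also have "\<dots> = ctrace (cadj U ** (M 0 ** U ** K))" by (rule ctrace_comm)
    also have "\<dots> = ctrace (P ** K)" unfolding P_def by (simp add: matrix_mul_assoc)
    finally show ?thesis .
  qed
  also have "Re (ctrace (P ** K)) \<le> (a * (\<Sum>l\<in>UNIV. \<beta> l) + Re (ctrace (Binv ** K ** K)) / a) / 2"
    unfolding Binv_def by (rule PK[OF V beta P P1 Kh a])
  also have "Re (ctrace (Binv ** K ** K)) = (\<Sum>j<N. \<Sum>k<N. gf Binv \<kappa> (D j) (D k) * (\<sigma> j * \<sigma> k))"
    unfolding K_def re_tr_KK gf_def c_def by (intro sum.cong refl) (simp add: mult_ac)
  finally have key: "(\<Sum>j<N. c j * Re (ctrace (M 0 ** \<rho> \<theta> (snd (D j))))) \<le>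
      (a * (\<Sum>l\<in>UNIV. \<beta> l) + (\<Sum>j<N. \<Sum>k<N. gf Binv \<kappa> (D j) (D k) * (\<sigma> j * \<sigma> k)) / a) / 2" .
  have "(\<Sum>j<N. \<sigma> j * loss \<rho> \<theta> M (D j)) = (\<Sum>j<N. zf (D j) * \<sigma> j) + (\<Sum>j<N. c j * Re (ctrace (M 0 ** \<rho> \<theta> (snd (D j)))))"
    by (simp add: loss_eq sum.distrib)
  also have "\<dots> \<le> (\<Sum>j<N. zf (D j) * \<sigma> j) + (a * (\<Sum>l\<in>UNIV. \<beta> l) + (\<Sum>j<N. \<Sum>k<N. gf Binv \<kappa> (D j) (D k) * (\<sigma> j * \<sigma> k)) / a) / 2"
    using key by simp
  finally have "(\<Sum>j<N. \<sigma> j * loss \<rho> \<theta> M (D j)) / sqrt (real N) \<le> ((\<Sum>j<N. zf (D j) * \<sigma> j) + (a * (\<Sum>l\<in>UNIV. \<beta> l) + (\<Sum>j<N. \<Sum>k<N. gf Binv \<kappa> (D j) (D k) * (\<sigma> j * \<sigma> k)) / a) / 2) / sqrt (real N)"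
    by (rule divide_right_mono) simp
  thus "(\<Sum>j<N. \<sigma> j * loss \<rho> (fst tm) (snd tm) (D j)) / sqrt (real N) \<le> ((\<Sum>j<N. zf (D j) * \<sigma> j) + (a * (\<Sum>l\<in>UNIV. \<beta> l) +
      (\<Sum>j<N. \<Sum>k<N. gf (V ** diagm (\<lambda>l. complex_of_real (1 / \<beta> l)) ** cadj V) (kappa i0 S) (D j) (D k) * (\<sigma> j * \<sigma> k)) / a) / 2)
     / sqrt (real N)"
    unfolding \<theta>_def M_def Binv_def \<kappa>_def .
qed


theorem mainTheorem4:
  fixes N :: nat
    and p :: "(nat \<times> 'x::finite) pmf"
    and \<Theta> :: "(nat \<Rightarrow> 'p) set"
    and L :: nat
    and Ul :: "nat \<Rightarrow> 'p \<Rightarrow> complex ^ 'n::finite ^ 'n"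
    and S :: "'x \<Rightarrow> complex ^ 'n ^ 'n"
    and i0 :: 'n
    and \<rho> :: "(nat \<Rightarrow> 'p) \<Rightarrow> 'x \<Rightarrow> complex ^ 'n ^ 'n"
  assumes labels: "set_pmf p \<subseteq> {0, 1} \<times> UNIV"
    and Theta_ne: "\<Theta> \<noteq> {}"
    and layers_unitary: "\<And>l a. unitary (Ul l a)"
    and S_unitary: "\<And>x. unitary (S x)"
    and rho_def: "\<And>\<theta> x. \<rho> \<theta> x =
        layer_prod L Ul \<theta> ** S x ** proj0 i0 ** cadj (S x) ** cadj (layer_prod L Ul \<theta>)"
  shows "rademacher N p \<Theta> \<rho> \<le>
    Re (ctrace (msqrt (measure_pmf.expectation (map_pmf snd p)
          (\<lambda>x. kappa i0 S x ** kappa i0 S x))))"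
proof -
  define q where "q = map_pmf snd p"
  define \<kappa> where "\<kappa> = kappa i0 S"
  define E2 where "E2 = measure_pmf.expectation q (\<lambda>x. \<kappa> x ** \<kappa> x)"
  have E2sum: "E2 = (\<Sum>x\<in>UNIV. pmf q x *\<^sub>R (\<kappa> x ** \<kappa> x))"
    unfolding E2_def by (rule integral_measure_pmf[of UNIV]) auto
  have kpsd: "psd (\<kappa> x ** \<kappa> x)" for x
    using kappa_idem[where S=S and x=x] kappa_psd[where S=S and x=x] S_unitary[of x]
    unfolding \<kappa>_def by simp
  have E2psd: "psd E2" unfolding E2sum by (intro psd_sum psd_scaleR kpsd pmf_nonneg)
  obtain V lam where V: "unitary V" and lam0: "\<forall>i. 0 \<le> lam i"
    and E2d: "E2 = V ** diagm (\<lambda>i. complex_of_real (lam i)) ** cadj V"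
    using spectral_psd[OF E2psd] by blast
  define b where "b i = sqrt (lam i)" for i
  have msq: "msqrt E2 = V ** diagm (\<lambda>i. complex_of_real (b i)) ** cadj V"
    unfolding b_def using lam0 by (intro msqrt_spec[OF V _ E2d]) auto
  have b0: "0 \<le> b i" for i unfolding b_def using lam0 by simp
  have TB: "Re (ctrace (msqrt E2)) = (\<Sum>i\<in>UNIV. b i)"
    unfolding msq using V by (simp add: ctrace_conj_unitary ctrace_diagm)
  have goalR: "Re (ctrace (msqrt (measure_pmf.expectation (map_pmf snd p) (\<lambda>x. kappa i0 S x ** kappa i0 S x)))) = (\<Sum>i\<in>UNIV. b i)"
    using TB unfolding E2_def q_def \<kappa>_def .
  define PD where "PD = Pi_pmf {..<N} undefined (\<lambda>_. p)"
  define PS where "PS = Pi_pmf {..<N} (1::real) (\<lambda>_. rad)"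
  define Fi where "Fi = (\<lambda>(D, \<sigma>). SUP tm \<in> \<Theta> \<times> binary_povms.
          (\<Sum>j<N. \<sigma> j * loss \<rho> (fst tm) (snd tm) (D j)) / sqrt (real N))"
  have radeq: "rademacher N p \<Theta> \<rho> = measure_pmf.expectation (pair_pmf PD PS) Fi"
    unfolding rademacher_def PD_def PS_def Fi_def rad_def ..
  have fp: "finite (set_pmf p)"
    using labels by (rule finite_subset) simp
  have fPD: "finite (set_pmf PD)" unfolding PD_def by (intro finite_Pi_support fp) simp
  have fPS: "finite (set_pmf PS)" unfolding PS_def by (intro finite_Pi_support) (auto simp: set_rad)
  have fPP: "finite (set_pmf (pair_pmf PD PS))" using fPD fPS by simp
  have int: "integrable (measure_pmf (pair_pmf PD PS)) f" for f :: "_ \<Rightarrow> real"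
    by (rule integrable_measure_pmf_finite[OF fPP])
  show ?thesis
  proof (cases "N = 0")
    case True
    have "Fi x = 0" for x
    proof -
      obtain D \<sigma> where x: "x = (D, \<sigma>)" by fastforce
      have "Fi x = (SUP tm \<in> \<Theta> \<times> (binary_povms :: (nat \<Rightarrow> 'n cmat) set). (0::real))"
        unfolding Fi_def x using True by simp
      also have "\<dots> = 0" using Theta_ne povms_ne by (intro cSUP_const) blast
      finally show ?thesis .
    qed
    hence "Fi = (\<lambda>_. 0)" by (rule ext)
    hence "rademacher N p \<Theta> \<rho> = 0" unfolding radeq by simp
    also have "0 \<le> (\<Sum>i\<in>UNIV. b i)" using b0 by (simp add: sum_nonneg)
    finally show ?thesis using goalR by simp
  next
    case False
    hence N: "N > 0" by simp
    show ?thesis unfolding goalR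
    proof (rule field_le_epsilon)
      fix e :: real assume e: "e > 0"
      define \<epsilon> where "\<epsilon> = e / real CARD('n)"
      have eps: "\<epsilon> > 0" unfolding \<epsilon>_def using e by simp
      define \<beta> where "\<beta> l = b l + \<epsilon>" for l
      have beta: "\<beta> l > 0" for l unfolding \<beta>_def using b0[of l] eps by simp
      define Binv where "Binv = V ** diagm (\<lambda>l. complex_of_real (1 / \<beta> l)) ** cadj V"
      define a where "a = sqrt (real N)"
      have a: "a > 0" unfolding a_def using N by simp
      define T where "T = (\<Sum>l\<in>UNIV. \<beta> l)"
      have Teq: "T = (\<Sum>l\<in>UNIV. b l) + e"
        unfolding T_def \<beta>_def \<epsilon>_def by (simp add: sum.distrib)
      define R where "R = Re (ctrace (Binv ** E2))"
      have Rle: "R \<le> (\<Sum>l\<in>UNIV. b l)"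
      proof -
        have "Binv ** E2 = V ** (diagm (\<lambda>l. complex_of_real (1 / \<beta> l)) ** (cadj V ** V) ** diagm (\<lambda>i. complex_of_real (lam i))) ** cadj V"
          unfolding Binv_def E2d by (simp add: matrix_mul_assoc)
        also have "\<dots> = V ** diagm (\<lambda>l. complex_of_real (lam l / \<beta> l)) ** cadj V"
          using V by (simp add: unit_simps diagm_mult)
        finally have "R = (\<Sum>l\<in>UNIV. lam l / \<beta> l)"
          unfolding R_def using V by (simp add: ctrace_conj_unitary ctrace_diagm)
        also have "\<dots> \<le> (\<Sum>l\<in>UNIV. b l)"
        proof (rule sum_mono)
          fix l
          have lb: "lam l = b l * b l" unfolding b_def using lam0 by simp
          have "b l * b l \<le> b l * \<beta> l" unfolding \<beta>_def using b0[of l] eps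
            by (intro mult_left_mono) auto
          thus "lam l / \<beta> l \<le> b l" using beta[of l] lb by (simp add: divide_simps)
        qed
        finally show ?thesis .
      qed
      define H where "H x = ((\<Sum>j<N. zf (fst x j) * snd x j) + (a * T +
          (\<Sum>j<N. \<Sum>k<N. gf Binv \<kappa> (fst x j) (fst x k) * (snd x j * snd x k)) / a) / 2) / sqrt (real N)"
        for x :: "(nat \<Rightarrow> nat \<times> 'x) \<times> (nat \<Rightarrow> real)"
      have pw: "Fi x \<le> H x" if x: "x \<in> set_pmf (pair_pmf PD PS)" for x
      proof -
        obtain D \<sigma> where xD: "x = (D, \<sigma>)" by fastforce
        have "D \<in> set_pmf PD" using x xD by simp
        hence Dp: "D j \<in> set_pmf p" if "j < N" for j
          unfolding PD_def using that by (auto simp: set_Pi_pmf PiE_dflt_def)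
        have Ds: "fst (D j) \<in> {0,1}" if "j < N" for j using Dp[OF that] labels by auto
        show ?thesis unfolding xD Fi_def H_def T_def Binv_def \<kappa>_def a_def
          using pointwise[where a="sqrt (real N)" and \<sigma>=\<sigma>, OF Theta_ne layers_unitary S_unitary rho_def V beta _ N Ds] N
          by simp
      qed
      have "rademacher N p \<Theta> \<rho> \<le> measure_pmf.expectation (pair_pmf PD PS) H"
        unfolding radeq by (intro integral_mono_AE int AE_pmfI pw)
      also have "measure_pmf.expectation (pair_pmf PD PS) H = (T + R) / 2"
      proof -
        have z0: "measure_pmf.expectation (pair_pmf PD PS) (\<lambda>x. zf (fst x j) * snd x j) = 0"
          if j: "j < N" for j
        proof -
          have "measure_pmf.expectation (pair_pmf PD PS) (\<lambda>x. zf (fst x j) * snd x j) =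
                measure_pmf.expectation PD (\<lambda>D. zf (D j)) * measure_pmf.expectation PS (\<lambda>s. s j)"
            using expect_pair_prod[OF fPD fPS, of "\<lambda>D. zf (D j)" "\<lambda>s. s j"] by simp
          also have "measure_pmf.expectation PS (\<lambda>s. s j) = 0"
            unfolding PS_def using sigma_mean[OF j] .
          finally show ?thesis by simp
        qed
        have gp: "measure_pmf.expectation p (\<lambda>cx. gf Binv \<kappa> cx cx) = R"
        proof -
          have "measure_pmf.expectation p (\<lambda>cx. gf Binv \<kappa> cx cx) =
                measure_pmf.expectation p (\<lambda>cx. Re (ctrace (Binv ** \<kappa> (snd cx) ** \<kappa> (snd cx))))"
            unfolding gf_def tt_def by (intro Bochner_Integration.integral_cong refl) simp
          also have "\<dots> = measure_pmf.expectation q (\<lambda>x. Re (ctrace (Binv ** \<kappa> x ** \<kappa> x)))"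
            unfolding q_def by simp
          also have "\<dots> = (\<Sum>x\<in>UNIV. Re (ctrace (Binv ** \<kappa> x ** \<kappa> x)) * pmf q x)"
            by (rule integral_measure_pmf_real) auto
          also have "\<dots> = R"
            unfolding R_def E2sum
            by (simp add: matrix_sum_right matrix_scaleR_right ctrace_sum ctrace_scaleR Re_sum matrix_mul_assoc mult.commute)
          finally show ?thesis .
        qed
        have g0: "measure_pmf.expectation (pair_pmf PD PS) (\<lambda>x. gf Binv \<kappa> (fst x j) (fst x k) * (snd x j * snd x k))
                  = (if j = k then R else 0)" if j: "j < N" and k: "k < N" for j k
        proof -
          have "measure_pmf.expectation (pair_pmf PD PS) (\<lambda>x. gf Binv \<kappa> (fst x j) (fst x k) * (snd x j * snd x k)) =
                measure_pmf.expectation PD (\<lambda>D. gf Binv \<kappa> (D j) (D k)) * measure_pmf.expectation PS (\<lambda>s. s j * s k)"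
            using expect_pair_prod[OF fPD fPS, of "\<lambda>D. gf Binv \<kappa> (D j) (D k)" "\<lambda>s. s j * s k"] by simp
          also have "\<dots> = (if j = k then R else 0)"
          proof (cases "j = k")
            case True
            have "measure_pmf.expectation PD (\<lambda>D. gf Binv \<kappa> (D j) (D j)) = R"
              unfolding PD_def using expect_component[of "{..<N}" j undefined p "\<lambda>cx. gf Binv \<kappa> cx cx"] j gp
              by simp
            moreover have "measure_pmf.expectation PS (\<lambda>s. s j * s j) = 1"
              unfolding PS_def using sigma_sq[OF j] .
            ultimately show ?thesis using True by simp
          next
            case False
            have "measure_pmf.expectation PS (\<lambda>s. s j * s k) = 0"
              unfolding PS_def using sigma_cross[OF j k False] .
            thus ?thesis using False by simp
          qed
          finally show ?thesis .
        qed
        have "measure_pmf.expectation (pair_pmf PD PS) H =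
              ((\<Sum>j<N. measure_pmf.expectation (pair_pmf PD PS) (\<lambda>x. zf (fst x j) * snd x j)) +
               (a * T + (\<Sum>j<N. \<Sum>k<N. measure_pmf.expectation (pair_pmf PD PS)
                   (\<lambda>x. gf Binv \<kappa> (fst x j) (fst x k) * (snd x j * snd x k))) / a) / 2) / sqrt (real N)"
          unfolding H_def by (simp add: int Bochner_Integration.integral_sum Bochner_Integration.integral_add)
        also have "\<dots> = ((a * T + (\<Sum>j<N. \<Sum>k<N. (if j = k then R else 0)) / a) / 2) / sqrt (real N)"
          using z0 g0 by simp
        also have "(\<Sum>j<N. \<Sum>k<N. (if j = k then R else 0)) = real N * R"
          by simp
        also have "((a * T + real N * R / a) / 2) / sqrt (real N) = (T + R) / 2"
        proof -
          have s: "sqrt (real N) > 0" using N by simp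
          have ss: "sqrt (real N) * sqrt (real N) = real N" by simp
          have e1: "a * T / sqrt (real N) = T" unfolding a_def using s by simp
          have e2: "real N * R / a / sqrt (real N) = R" unfolding a_def using s N
            by (simp add: divide_divide_eq_left ss)
          have "((a * T + real N * R / a) / 2) / sqrt (real N) = (a * T / sqrt (real N) + real N * R / a / sqrt (real N)) / 2"
            using s a by (simp add: field_simps)
          thus ?thesis using e1 e2 by simp
        qed
        finally show ?thesis .
      qed
      also have "\<dots> \<le> (\<Sum>l\<in>UNIV. b l) + e" using Rle Teq e by simp
      finally show "rademacher N p \<Theta> \<rho> \<le> (\<Sum>l\<in>UNIV. b l) + e" .
    qed
  qed
qed


end
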